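(* For every partial abstraction $A$ and every expression $e$ (containing no $\&i$ markers, abstraction variables or holes), if $\textsc{LambdaUnify}(A,e)\rightsquigarrow l$ then $l\circ A=e$.
   Context: Expressions: $e ::= \lambda.\,e\mid(e\ e)\mid\$i\mid\&i\mid t$ with de Bruijn indices $\$i$ ($i\in\mathbb{N}$; $\$i$ refers to the $i$-th closest enclosing $\lambda$), overshifted markers $\&i$ ($i\in\mathbb{Z}$) and primitive symbols $t$. Partial abstractions: $A ::= \lambda.\,A\mid(A\ A)\mid\$i\mid t\mid\alpha\mid ??_j$ with abstraction variables $\alpha$ and uniquely indexed holes $??_j$. Downshift: $\downarrow_d(\lambda.b)=\lambda.\downarrow_{d+1}b$; $\downarrow_d(f\ x)=(\downarrow_d f)(\downarrow_d x)$; $\downarrow_d\$i=\$i$ if $i<d$, $\$(i-1)$ if $i>d$, $\&(i-1)$ if $i=d$; $\downarrow_d\&i=\&(i-1)$; $\downarrow_d t=t$. Upshift: $\uparrow_d(\lambda.b)=\lambda.\uparrow_{d+1}b$; $\uparrow_d(f\ x)=(\uparrow_d f)(\uparrow_d x)$; $\uparrow_d\$i=\$i$ if $i<d$, $\$(i+1)$ if $i\ge d$; $\uparrow_d\&i=\&(i+1)$ if $i+1\ne d$, $\$(i+1)$ if $i+1=d$; $\uparrow_d t=t$. A mapping is a finite map from abstraction variables and holes to expressions; $\textsc{DownshiftAll}(l)$ and $\textsc{UpshiftAll}(l)$ apply $\downarrow_0$, resp. $\uparrow_0$, to every bound expression; $\mathrm{merge}(l_1,l_2)$ is the union of $l_1,l_2$,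 undefined if some key is bound to two different expressions. $\textsc{LambdaUnify}$ is the relation given by: $\textsc{LambdaUnify}(\alpha,e)\rightsquigarrow[\alpha\to e]$; $\textsc{LambdaUnify}(??_i,e)\rightsquigarrow[??_i\to e]$; if $\textsc{LambdaUnify}(A_1,e_1)\rightsquigarrow l_1$, $\textsc{LambdaUnify}(A_2,e_2)\rightsquigarrow l_2$ and $l=\mathrm{merge}(l_1,l_2)$ is defined then $\textsc{LambdaUnify}((A_1\ A_2),(e_1\ e_2))\rightsquigarrow l$; if $\textsc{LambdaUnify}(A,e)\rightsquigarrow l'$ then $\textsc{LambdaUnify}(\lambda.A,\lambda.e)\rightsquigarrow\textsc{DownshiftAll}(l')$; and $\textsc{LambdaUnify}(e,e)\rightsquigarrow[\,]$ when $A$ is an expression (no holes or abstraction variables) identical to $e$. Substitution $l\circ A$ (which models beta-reducing $(\lambda\alpha_i.\dots\lambda ??_j.\dots A)$ applied to the bound expressions): $l\circ\lambda.b=\lambda.(\textsc{UpshiftAll}(l)\circ b)$; $l\circ(f\ x)=(l\circ f)(l\circ x)$; $l\circ\$i=\$i$; $l\circ\alpha=l[\alpha]$; $l\circ ??_i=l[??_i]$; $l\circ t=t$. *)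

theory Defs
  imports Main
begin

text \<open>Expressions: lambda, application, de Bruijn index, overshifted marker, primitive.\<close>
datatype 'p expr = ELam "'p expr" | EApp "'p expr" "'p expr" | EVar nat | EAmp int | EPrim 'p

datatype ('p, 'v) pabs = ALam "('p, 'v) pabs" | AApp "('p, 'v) pabs" "('p, 'v) pabs"
  | AVar nat | APrim 'p | AAbs 'v | AHole nat

datatype 'v key = KAbs 'v | KHole nat

type_synonym ('p, 'v) mapping = "'v key \<rightharpoonup> 'p expr"

fun no_markers :: "'p expr \<Rightarrow> bool" where
  "no_markers (ELam b) = no_markers b"
| "no_markers (EApp f x) = (no_markers f \<and> no_markers x)"
| "no_markers (EVar i) = True"
| "no_markers (EAmp i) = False"
| "no_markers (EPrim t) = True"

fun downshift :: "nat \<Rightarrow> 'p expr \<Rightarrow> 'p expr" where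
  "downshift d (ELam b) = ELam (downshift (Suc d) b)"
| "downshift d (EApp f x) = EApp (downshift d f) (downshift d x)"
| "downshift d (EVar i) =
     (if i < d then EVar i else if i > d then EVar (i - 1) else EAmp (int i - 1))"
| "downshift d (EAmp i) = EAmp (i - 1)"
| "downshift d (EPrim t) = EPrim t"

fun upshift :: "nat \<Rightarrow> 'p expr \<Rightarrow> 'p expr" where
  "upshift d (ELam b) = ELam (upshift (Suc d) b)"
| "upshift d (EApp f x) = EApp (upshift d f) (upshift d x)"
| "upshift d (EVar i) = (if i < d then EVar i else EVar (i + 1))"
| "upshift d (EAmp i) = (if i + 1 \<noteq> int d then EAmp (i + 1) else EVar (nat (i + 1)))"
| "upshift d (EPrim t) = EPrim t"

definition downshift_all :: "('p, 'v) mapping \<Rightarrow> ('p, 'v) mapping" where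
  "downshift_all l = (\<lambda>k. map_option (downshift 0) (l k))"

definition upshift_all :: "('p, 'v) mapping \<Rightarrow> ('p, 'v) mapping" where
  "upshift_all l = (\<lambda>k. map_option (upshift 0) (l k))"

definition merge :: "('p, 'v) mapping \<Rightarrow> ('p, 'v) mapping \<Rightarrow> ('p, 'v) mapping option" where
  "merge l1 l2 = (if \<forall>k \<in> dom l1 \<inter> dom l2. l1 k = l2 k then Some (l1 ++ l2) else None)"

fun pabs_to_expr :: "('p, 'v) pabs \<Rightarrow> 'p expr option" where
  "pabs_to_expr (ALam b) = map_option ELam (pabs_to_expr b)"
| "pabs_to_expr (AApp f x) =
     (case (pabs_to_expr f, pabs_to_expr x) of (Some f', Some x') \<Rightarrow> Some (EApp f' x') | _ \<Rightarrow> None)"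
| "pabs_to_expr (AVar i) = Some (EVar i)"
| "pabs_to_expr (APrim t) = Some (EPrim t)"
| "pabs_to_expr (AAbs a) = None"
| "pabs_to_expr (AHole j) = None"

inductive lambda_unify :: "('p, 'v) pabs \<Rightarrow> 'p expr \<Rightarrow> ('p, 'v) mapping \<Rightarrow> bool" where
  lu_abs: "lambda_unify (AAbs a) e [KAbs a \<mapsto> e]"
| lu_hole: "lambda_unify (AHole i) e [KHole i \<mapsto> e]"
| lu_app: "\<lbrakk>lambda_unify A1 e1 l1; lambda_unify A2 e2 l2; merge l1 l2 = Some l\<rbrakk>
           \<Longrightarrow> lambda_unify (AApp A1 A2) (EApp e1 e2) l"
| lu_lam: "lambda_unify A e l' \<Longrightarrow> lambda_unify (ALam A) (ELam e) (downshift_all l')"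
| lu_eq: "pabs_to_expr A = Some e \<Longrightarrow> lambda_unify A e Map.empty"

fun subst :: "('p, 'v) mapping \<Rightarrow> ('p, 'v) pabs \<Rightarrow> 'p expr option" where
  "subst l (ALam b) = map_option ELam (subst (upshift_all l) b)"
| "subst l (AApp f x) =
     (case (subst l f, subst l x) of (Some f', Some x') \<Rightarrow> Some (EApp f' x') | _ \<Rightarrow> None)"
| "subst l (AVar i) = Some (EVar i)"
| "subst l (AAbs a) = l (KAbs a)"
| "subst l (AHole i) = l (KHole i)"
| "subst l (APrim t) = Some (EPrim t)"

end

theory Submission
  imports Defs
begin

fun good :: "nat \<Rightarrow> 'p expr \<Rightarrow> bool" where
  "good d (ELam b) = good (Suc d) b"
| "good d (EApp f x) = (good d f \<and> good d x)"
| "good d (EVar i) = True"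
| "good d (EAmp i) = (i < int d)"
| "good d (EPrim t) = True"

lemma nm_good: "no_markers x \<Longrightarrow> good d x"
  by (induction x arbitrary: d) auto

lemma good_down: "good d x \<Longrightarrow> good d (downshift d x)"
  by (induction x arbitrary: d) auto

lemma up_down: "good d x \<Longrightarrow> upshift d (downshift d x) = x"
  by (induction x arbitrary: d) auto

lemma subst_mono: "subst l A = Some e \<Longrightarrow> l \<subseteq>\<^sub>m l' \<Longrightarrow> subst l' A = Some e"
proof (induction l A arbitrary: e l' rule: subst.induct)
  case (1 l b)
  have "upshift_all l \<subseteq>\<^sub>m upshift_all l'"
  proof (unfold map_le_def, intro ballI)
    fix k assume "k \<in> dom (upshift_all l)"
    then have "l k \<noteq> None" by (simp add: upshift_all_def domIff)
    then have "k \<in> dom l" by blast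
    then have "l k = l' k" using 1(3) by (simp add: map_le_def)
    then show "upshift_all l k = upshift_all l' k" by (simp add: upshift_all_def)
  qed
  moreover obtain b' where b: "subst (upshift_all l) b = Some b'" "e = ELam b'"
    using 1(2) by auto
  ultimately have "subst (upshift_all l') b = Some b'" using 1(1) by blast
  then show ?case using b(2) by simp
next
  case (2 l f x)
  obtain f' x' where fx: "subst l f = Some f'" "subst l x = Some x'" "e = EApp f' x'"
    using 2(3) by (auto split: option.splits)
  have "subst l' f = Some f'" using 2(1)[OF fx(1) 2(4)] .
  moreover have "subst l' x = Some x'" using 2(2)[OF fx(2) 2(4)] .
  ultimately show ?case using fx(3) by simp
next
  case (4 l a)
  then have "KAbs a \<in> dom l" by auto
  with 4 show ?case by (metis map_le_def subst.simps(4))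
next
  case (5 l a)
  then have "KHole a \<in> dom l" by auto
  with 5 show ?case by (metis map_le_def subst.simps(5))
next
  case (3 l i) then show ?case by simp
next
  case (6 l t) then show ?case by simp
qed

lemma subst_pe: "pabs_to_expr A = Some e \<Longrightarrow> subst l A = Some e"
  by (induction A arbitrary: e l) (auto split: option.splits)

lemma main: "lambda_unify A e l \<Longrightarrow> no_markers e \<Longrightarrow>
   subst l A = Some e \<and> (\<forall>k v. l k = Some v \<longrightarrow> good 0 v)"
proof (induction rule: lambda_unify.induct)
  case (lu_abs a e) then show ?case by (auto simp: nm_good)
next
  case (lu_hole i e) then show ?case by (auto simp: nm_good)
next
  case (lu_app A1 e1 l1 A2 e2 l2 l)
  have m: "l = l1 ++ l2" "\<forall>k \<in> dom l1 \<inter> dom l2. l1 k = l2 k"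
    using lu_app(3) unfolding merge_def by (auto split: if_splits)
  have le1: "l1 \<subseteq>\<^sub>m l"
  proof (unfold map_le_def, intro ballI)
    fix k assume k: "k \<in> dom l1"
    show "l1 k = l k"
    proof (cases "l2 k")
      case None then show ?thesis using m(1) by (simp add: map_add_def)
    next
      case (Some v) then have "k \<in> dom l2" by blast
      then show ?thesis using m k Some by simp
    qed
  qed
  have le2: "l2 \<subseteq>\<^sub>m l" using m by (simp add: map_le_map_add)
  from lu_app have i1: "subst l1 A1 = Some e1" "\<forall>k v. l1 k = Some v \<longrightarrow> good 0 v"
    and i2: "subst l2 A2 = Some e2" "\<forall>k v. l2 k = Some v \<longrightarrow> good 0 v" by auto
  have "subst l A1 = Some e1" using subst_mono[OF i1(1) le1] .
  moreover have "subst l A2 = Some e2" using subst_mono[OF i2(1) le2] .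
  moreover have "\<forall>k v. l k = Some v \<longrightarrow> good 0 v"
    using i1(2) i2(2) m(1) by (auto simp: map_add_def split: option.splits)
  ultimately show ?case by simp
next
  case (lu_lam A e l')
  then have i: "subst l' A = Some e" "\<forall>k v. l' k = Some v \<longrightarrow> good 0 v" by auto
  have "upshift_all (downshift_all l') = l'"
  proof
    fix k show "upshift_all (downshift_all l') k = l' k"
      using i(2) up_down[of 0] unfolding upshift_all_def downshift_all_def
      by (cases "l' k") auto
  qed
  moreover have "\<forall>k v. downshift_all l' k = Some v \<longrightarrow> good 0 v"
    using i(2) good_down[of 0] unfolding downshift_all_def by auto
  ultimately show ?case using i(1) by simp
next
  case (lu_eq A e) then show ?case by (simp add: subst_pe)
qed

theorem theoremB9:
  fixes A :: "('p, 'v) pabs" and e :: "'p expr" and l :: "('p, 'v) mapping"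
  assumes "no_markers e"
    and "lambda_unify A e l"
  shows "subst l A = Some e"
  using main[OF assms(2) assms(1)] by simp

end
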